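(* Consider an episode in which the first event is an original post with probability $\alpha\in[0,1]$ and a repost with probability $1-\alpha$, the number of segments is $1+S$ with $S\sim\mathrm{Pois}(\gamma)$, $\gamma\ge0$, the segments alternate in type (original-post segment, repost segment, ...) starting with the type of the first event, and, independently, each original-post segment contains $1+\mathrm{Pois}(\mu_1)$ events and each repost segment contains $1+\mathrm{Pois}(\mu_0)$ events ($\mu_1,\mu_0\ge0$). Then the expected total number of events in the episode equals $$\frac12(2+\mu_1+\mu_0)(\gamma+1)+c(\gamma,\alpha)(\mu_1-\mu_0),\qquad c(\gamma,\alpha)=e^{-\gamma}\Big(\alpha-\frac12\Big)\sum_{k=0}^\infty\frac{\gamma^{2k}}{(2k)!}.$$
   Context: An episode is a cluster of posts consisting of consecutive segments; a segment is a maximal run of events of the same type (original post or repost). *)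

theory Defs
  imports "HOL-Probability.Probability"
begin

text \<open>Poisson distribution with rate r \<ge> 0 (rate 0 gives the point mass at 0).
  The library's poisson_pmf requires a strictly positive rate, so we use the
  explicit mass function.\<close>
definition pois :: "real \<Rightarrow> nat pmf" where
  "pois r = embed_pmf (\<lambda>k. r ^ k / fact k * exp (- r))"

text \<open>Total number of events in n consecutive alternating segments, the first of
  which is an original-post segment iff b.\<close>
fun seg_total :: "real \<Rightarrow> real \<Rightarrow> bool \<Rightarrow> nat \<Rightarrow> nat pmf" where
  "seg_total mu1 mu0 b 0 = return_pmf 0"
| "seg_total mu1 mu0 b (Suc n) =
     bind_pmf (pois (if b then mu1 else mu0)) (\<lambda>x.
     bind_pmf (seg_total mu1 mu0 (\<not> b) n) (\<lambda>r.
     return_pmf (1 + x + r)))"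

definition episode_total :: "real \<Rightarrow> real \<Rightarrow> real \<Rightarrow> real \<Rightarrow> nat pmf" where
  "episode_total alpha gamma mu1 mu0 =
     bind_pmf (bernoulli_pmf alpha) (\<lambda>b.
     bind_pmf (pois gamma) (\<lambda>s.
     seg_total mu1 mu0 b (Suc s)))"

end

theory Submission
  imports Defs
begin

definition pp :: "real \<Rightarrow> nat \<Rightarrow> real" where
  "pp r k = r ^ k / fact k * exp (- r)"

lemma pp_nonneg: "0 \<le> r \<Longrightarrow> 0 \<le> pp r k"
  by (simp add: pp_def)

lemma pp_sums: "(\<lambda>k. pp r k) sums 1"
proof -
  have "(\<lambda>n. r^n /\<^sub>R fact n * exp (-r)) sums (exp r * exp (-r))"
    by (intro sums_mult2 exp_converges)
  then show ?thesis
    by (simp add: pp_def divide_inverse mult_exp_exp mult.commute mult.left_commute)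
qed

lemma aux_mean: "(a::real) \<noteq> 0 \<Longrightarrow> F \<noteq> 0 \<Longrightarrow> r * x / (a * F) * e * a = r * (x / F * e)"
  by (simp add: field_simps)

lemma pp_mean_sums: "(\<lambda>k. pp r k * real k) sums r"
proof -
  have "(\<lambda>k. r * pp r k) sums (r * 1)"
    by (intro sums_mult pp_sums)
  moreover have "(\<lambda>k. pp r (Suc k) * real (Suc k)) = (\<lambda>k. r * pp r k)"
  proof (rule ext)
    fix k
    have "real (Suc k) > 0" by simp
    have "fact (Suc k) = real (Suc k) * fact k" by (simp add: fact_Suc)
    then show "pp r (Suc k) * real (Suc k) = r * pp r k"
      unfolding pp_def power_Suc using \<open>real (Suc k) > 0\<close> aux_mean[of "real (Suc k)" "fact k" r "r^k" "exp (-r)"]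
      by (simp del: of_nat_Suc)
  qed
  ultimately have "(\<lambda>k. pp r (Suc k) * real (Suc k)) sums r" by simp
  then show ?thesis by (subst (asm) sums_Suc_iff) simp
qed

lemma cosh_sums_even: "(\<lambda>k. (r::real) ^ (2*k) / fact (2*k)) sums cosh r"
proof -
  have "(\<lambda>n. if even n then r ^ n /\<^sub>R fact n else 0) sums cosh r"
    by (rule cosh_converges)
  moreover have "strict_mono (\<lambda>k::nat. 2*k)" by (simp add: strict_mono_def)
  ultimately have "(\<lambda>k. (\<lambda>n. if even n then r ^ n /\<^sub>R fact n else 0) (2*k)) sums cosh r"
    by (subst sums_mono_reindex) auto
  then show ?thesis by (simp add: divide_inverse_commute)
qed

definition ev :: "nat \<Rightarrow> real" where "ev n = (if even n then 1 else 0)"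

lemma pp_even_sums: "(\<lambda>k. pp r k * ev k) sums (exp (-r) * cosh r)"
proof -
  have "(\<lambda>n. (if even n then r ^ n /\<^sub>R fact n else 0) * exp (-r)) sums (cosh r * exp (-r))"
    by (intro sums_mult2 cosh_converges)
  moreover have "(\<lambda>k. pp r k * ev k) = (\<lambda>n. (if even n then r ^ n /\<^sub>R fact n else 0) * exp (-r))"
    by (rule ext) (simp add: pp_def ev_def real_scaleR_def divide_inverse mult.commute)
  ultimately show ?thesis by (simp add: mult.commute)
qed

lemma pmf_pois: assumes "0 \<le> r" shows "pmf (pois r) k = pp r k"
  unfolding pois_def pp_def
proof (rule pmf_embed_pmf)
  show "0 \<le> r ^ x / fact x * exp (- r)" for x using assms by simp
  have "(\<integral>\<^sup>+ x. ennreal (r ^ x / fact x * exp (- r)) \<partial>count_space UNIV) = (\<Sum>x. ennreal (pp r x))"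
    by (simp add: nn_integral_count_space_nat pp_def)
  also have "\<dots> = ennreal 1"
    by (rule suminf_ennreal_eq[OF pp_nonneg[OF assms] pp_sums])
  finally show "(\<integral>\<^sup>+ x. ennreal (r ^ x / fact x * exp (- r)) \<partial>count_space UNIV) = 1" by simp
qed

lemma nn_pois:
  assumes r: "0 \<le> r" and f: "\<And>s. 0 \<le> f s" and S: "(\<lambda>s. pp r s * f s) sums V"
  shows "(\<integral>\<^sup>+ s. ennreal (f s) \<partial>measure_pmf (pois r)) = ennreal V"
proof -
  have "(\<integral>\<^sup>+ s. ennreal (f s) \<partial>measure_pmf (pois r)) = (\<Sum>s. ennreal (pp r s * f s))"
    by (simp add: nn_integral_measure_pmf pmf_pois[OF r] nn_integral_count_space_nat
        ennreal_mult pp_nonneg[OF r] f)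
  also have "\<dots> = ennreal V"
    by (rule suminf_ennreal_eq[OF _ S]) (simp add: pp_nonneg[OF r] f)
  finally show ?thesis .
qed

definition segE :: "real \<Rightarrow> real \<Rightarrow> bool \<Rightarrow> nat \<Rightarrow> real" where
  "segE mu1 mu0 b n = real n + (if b then mu1 else mu0) * real ((n+1) div 2)
       + (if b then mu0 else mu1) * real (n div 2)"

lemma segE_nonneg: "0 \<le> mu1 \<Longrightarrow> 0 \<le> mu0 \<Longrightarrow> 0 \<le> segE mu1 mu0 b n"
  by (simp add: segE_def)

lemma segE_Suc: "segE mu1 mu0 b (Suc n) = 1 + (if b then mu1 else mu0) + segE mu1 mu0 (\<not> b) n"
proof -
  have "Suc (Suc n) div 2 = Suc (n div 2)" by simp
  then show ?thesis by (simp add: segE_def algebra_simps)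
qed

lemma seg_nn:
  assumes "0 \<le> mu1" "0 \<le> mu0"
  shows "(\<integral>\<^sup>+ x. ennreal (real x) \<partial>measure_pmf (seg_total mu1 mu0 b n)) = ennreal (segE mu1 mu0 b n)"
proof (induction n arbitrary: b)
  case 0
  then show ?case by (simp add: segE_def)
next
  case (Suc n)
  define m where "m = (if b then mu1 else mu0)"
  define E where "E = segE mu1 mu0 (\<not> b) n"
  have m0: "0 \<le> m" using assms by (simp add: m_def)
  have E0: "0 \<le> E" using assms by (simp add: E_def segE_nonneg)
  have inner: "(\<integral>\<^sup>+ r. ennreal (real (1 + x + r)) \<partial>measure_pmf (seg_total mu1 mu0 (\<not> b) n))
      = ennreal (1 + real x + E)" for x :: nat
  proof -
    have "(\<integral>\<^sup>+ r. ennreal (real (1 + x + r)) \<partial>measure_pmf (seg_total mu1 mu0 (\<not> b) n))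
       = (\<integral>\<^sup>+ r. ennreal (1 + real x) + ennreal (real r) \<partial>measure_pmf (seg_total mu1 mu0 (\<not> b) n))"
      by (intro nn_integral_cong) (simp add: ennreal_plus[symmetric] del: ennreal_plus)
    also have "\<dots> = ennreal (1 + real x) + (\<integral>\<^sup>+ r. ennreal (real r) \<partial>measure_pmf (seg_total mu1 mu0 (\<not> b) n))"
      by (subst nn_integral_add) (simp_all add: measure_pmf.emeasure_space_1)
    also have "\<dots> = ennreal (1 + real x + E)"
      using Suc.IH[of "\<not> b"] E0 by (simp add: E_def ennreal_plus[symmetric] del: ennreal_plus)
    finally show ?thesis .
  qed
  have S: "(\<lambda>x. pp m x * (1 + real x + E)) sums ((1 + E) * 1 + m)"
  proof -
    have "(\<lambda>x. (1 + E) * pp m x + pp m x * real x) sums ((1 + E) * 1 + m)"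
      by (intro sums_add sums_mult pp_sums pp_mean_sums)
    moreover have "(\<lambda>x. pp m x * (1 + real x + E)) = (\<lambda>x. (1 + E) * pp m x + pp m x * real x)"
      by (rule ext) (simp add: algebra_simps)
    ultimately show ?thesis by simp
  qed
  have "(\<integral>\<^sup>+ x. ennreal (real x) \<partial>measure_pmf (seg_total mu1 mu0 b (Suc n)))
      = (\<integral>\<^sup>+ x. ennreal (1 + real x + E) \<partial>measure_pmf (pois m))"
    unfolding seg_total.simps nn_integral_bind_pmf m_def[symmetric]
    by (subst nn_integral_return_pmf, simp)+ (simp only: inner)
  also have "\<dots> = ennreal ((1 + E) * 1 + m)"
    by (rule nn_pois[OF m0 _ S]) (simp add: E0 add_nonneg_nonneg)
  also have "(1 + E) * 1 + m = segE mu1 mu0 b (Suc n)"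
    by (simp add: segE_Suc E_def m_def)
  finally show ?case .
qed

lemma segE_Suc_formula:
  "segE mu1 mu0 b (Suc s) = (1 + (mu1 + mu0) / 2) * (1 + real s)
     + ((if b then mu1 else mu0) - (if b then mu0 else mu1)) / 2 * ev s"
proof (cases "even s")
  case True
  then obtain k where k: "s = 2 * k" by blast
  have a: "(Suc s + 1) div 2 = k + 1" "Suc s div 2 = k" using k by simp_all
  show ?thesis unfolding segE_def a using True k by (simp add: ev_def field_simps)
next
  case False
  then obtain k where k: "s = 2 * k + 1" using oddE by blast
  have a: "(Suc s + 1) div 2 = k + 1" "Suc s div 2 = k + 1" using k by simp_all
  show ?thesis unfolding segE_def a using False k by (simp add: ev_def field_simps)
qed

lemma sums_nonneg': "f sums V \<Longrightarrow> (\<And>n. 0 \<le> f n) \<Longrightarrow> 0 \<le> (V::real)"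
  by (metis sums_unique suminf_nonneg sums_summable)

theorem mainTheorem4:
  fixes alpha gamma mu1 mu0 :: real
  assumes "0 \<le> alpha" "alpha \<le> 1" "0 \<le> gamma" "0 \<le> mu1" "0 \<le> mu0"
  shows "integrable (measure_pmf (episode_total alpha gamma mu1 mu0)) real \<and>
         measure_pmf.expectation (episode_total alpha gamma mu1 mu0) real =
           (1/2) * (2 + mu1 + mu0) * (gamma + 1)
           + (exp (- gamma) * (alpha - 1/2) * (\<Sum>k. gamma ^ (2*k) / fact (2*k))) * (mu1 - mu0)"
proof -
  define A where "A = 1 + (mu1 + mu0) / 2"
  define B where "B = (\<lambda>b::bool. ((if b then mu1 else mu0) - (if b then mu0 else mu1)) / 2)"
  define H where "H = (\<lambda>b. A * 1 + A * gamma + B b * (exp (- gamma) * cosh gamma))"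
  have SH: "(\<lambda>s. pp gamma s * segE mu1 mu0 b (Suc s)) sums H b" for b
  proof -
    have "(\<lambda>s. A * pp gamma s + A * (pp gamma s * real s) + B b * (pp gamma s * ev s)) sums H b"
      unfolding H_def by (intro sums_add sums_mult pp_sums pp_mean_sums pp_even_sums)
    moreover have "(\<lambda>s. pp gamma s * segE mu1 mu0 b (Suc s))
        = (\<lambda>s. A * pp gamma s + A * (pp gamma s * real s) + B b * (pp gamma s * ev s))"
      by (rule ext) (simp add: segE_Suc_formula A_def B_def field_simps)
    ultimately show ?thesis by simp
  qed
  have H0: "0 \<le> H b" for b
    by (rule sums_nonneg'[OF SH]) (simp add: pp_nonneg assms segE_nonneg)
  have inner: "(\<integral>\<^sup>+ s. (\<integral>\<^sup>+ x. ennreal (real x) \<partial>measure_pmf (seg_total mu1 mu0 b (Suc s))) \<partial>measure_pmf (pois gamma))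
      = ennreal (H b)" for b
    unfolding seg_nn[OF assms(4,5)]
    by (rule nn_pois[OF assms(3) _ SH]) (simp add: segE_nonneg assms)
  define V where "V = H True * alpha + H False * (1 - alpha)"
  have V0: "0 \<le> V" unfolding V_def using H0 assms by simp
  have NN: "(\<integral>\<^sup>+ x. ennreal (real x) \<partial>measure_pmf (episode_total alpha gamma mu1 mu0)) = ennreal V"
    unfolding episode_total_def nn_integral_bind_pmf inner
    using assms H0 by (simp add: V_def nn_integral_bernoulli_pmf ennreal_mult[symmetric] ennreal_plus[symmetric] del: ennreal_plus)
  have int: "integrable (measure_pmf (episode_total alpha gamma mu1 mu0)) real"
    by (rule integrableI_bounded) (simp_all add: NN)
  have "measure_pmf.expectation (episode_total alpha gamma mu1 mu0) real = enn2real (ennreal V)"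
    by (subst integral_eq_nn_integral) (simp_all add: NN)
  also have "\<dots> = V" using V0 by simp
  also have "V = (1/2) * (2 + mu1 + mu0) * (gamma + 1)
           + (exp (- gamma) * (alpha - 1/2) * (\<Sum>k. gamma ^ (2*k) / fact (2*k))) * (mu1 - mu0)"
    unfolding V_def H_def A_def B_def sums_unique[OF cosh_sums_even, symmetric]
    by (simp add: field_simps)
  finally show ?thesis using int by simp
qed

end
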